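(* Let $(t_n(x))_{n\ge0}$ be the generalized Gončarov basis associated with $(\mathfrak d,\mathcal Z)$, where $\mathfrak d$ is a delta operator and $\mathcal Z=(z_i)_{i\ge0}$ a grid. Then $(t_n)$ is of binomial type if and only if $\mathcal Z$ is an arithmetic progression with initial term $0$, i.e. there is $b\in\mathbb K$ with $z_i=ib$ for all $i\ge0$.
   Context: $\mathbb K$ is a field of characteristic zero; a delta operator is a linear operator $\mathfrak d$ on $\mathbb K[x]$ commuting with all shifts $E_a:f(x)\mapsto f(x+a)$ and with $\mathfrak d(x)$ a nonzero constant. $\varepsilon_z$ is evaluation at $z$. The generalized Gončarov basis associated with $(\mathfrak d,\mathcal Z)$ is the unique sequence $(t_n)_{n\ge0}$ with $\deg t_n=n$ and $\varepsilon_{z_i}(\mathfrak d^{\,i}(t_n))=n!\,\delta_{i,n}$ for all $i,n$. A sequence $(t_n)$ with $\deg t_n=n$ is of binomial type if $t_n(x+y)=\sum_{k=0}^n\binom nk t_k(x)t_{n-k}(y)$ for all $n$. *)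

theory Defs
  imports "HOL-Computational_Algebra.Polynomial"
begin

definition shift_op :: "'a::comm_ring_1 \<Rightarrow> 'a poly \<Rightarrow> 'a poly" where
  "shift_op a p = pcompose p [:a, 1:]"

definition delta_operator :: "('a::field poly \<Rightarrow> 'a poly) \<Rightarrow> bool" where
  "delta_operator d \<longleftrightarrow>
     (\<forall>p q. d (p + q) = d p + d q) \<and>
     (\<forall>c p. d (smult c p) = smult c (d p)) \<and>
     (\<forall>a p. d (shift_op a p) = shift_op a (d p)) \<and>
     (\<exists>c. c \<noteq> 0 \<and> d [:0, 1:] = [:c:])"

definition goncarov_basis ::
  "('a::field_char_0 poly \<Rightarrow> 'a poly) \<Rightarrow> (nat \<Rightarrow> 'a) \<Rightarrow> (nat \<Rightarrow> 'a poly) \<Rightarrow> bool" where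
  "goncarov_basis d Z t \<longleftrightarrow>
     (\<forall>n. degree (t n) = n) \<and>
     (\<forall>i n. poly ((d ^^ i) (t n)) (Z i) = (if i = n then fact n else 0))"

definition binomial_type :: "(nat \<Rightarrow> 'a::comm_ring_1 poly) \<Rightarrow> bool" where
  "binomial_type t \<longleftrightarrow>
     (\<forall>n. degree (t n) = n) \<and>
     (\<forall>n x y. poly (t n) (x + y) =
        (\<Sum>k\<le>n. of_nat (n choose k) * poly (t k) x * poly (t (n - k)) y))"

end

theory Submission
  imports Defs
begin

lemma poly_shift[simp]: "poly (shift_op a p) x = poly p (a + x)"
  by (simp add: shift_op_def poly_pcompose)

lemma shift_eqI:
  fixes p q :: "'a::field_char_0 poly"
  assumes "\<And>x. poly p x = poly q x" shows "p = q"
  using assms poly_eq_poly_eq_iff by blast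

lemma shift_smult[simp]: "shift_op a (smult c p) = smult c (shift_op a (p::'a::field_char_0 poly))"
  by (rule shift_eqI) simp

lemma shift_shift[simp]: "shift_op a (shift_op b p) = shift_op (b + a) (p::'a::field_char_0 poly)"
  by (rule shift_eqI) (simp add: add.assoc)

lemma shift_zero[simp]: "shift_op a (0::'a::field_char_0 poly) = 0"
  by (rule shift_eqI) simp

lemma shift_0[simp]: "shift_op 0 (p::'a::field_char_0 poly) = p"
  by (rule shift_eqI) simp

lemma shift_diff: "shift_op a (p - q) = shift_op a p - shift_op a (q::'a::field_char_0 poly)"
  by (rule shift_eqI) simp

locale dop =
  fixes d :: "'a::field_char_0 poly \<Rightarrow> 'a poly"
  assumes D: "delta_operator d"
begin

lemma add: "d (p + q) = d p + d q" using D by (simp add: delta_operator_def)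
lemma smult: "d (smult c p) = smult c (d p)" using D by (simp add: delta_operator_def)
lemma shift: "d (shift_op a p) = shift_op a (d p)" using D by (simp add: delta_operator_def)

lemma zero: "d 0 = 0"
  using add[of 0 0] by simp

lemma diff: "d (p - q) = d p - d q"
proof -
  have e: "p - q = p + smult (-1) q" by simp
  show ?thesis unfolding e add smult by simp
qed

lemma pw_add: "(d ^^ i) (p + q) = (d ^^ i) p + (d ^^ i) q"
  by (induct i) (simp_all add: add)
lemma pw_smult: "(d ^^ i) (smult c p) = smult c ((d ^^ i) p)"
  by (induct i) (simp_all add: smult)
lemma pw_shift: "(d ^^ i) (shift_op a p) = shift_op a ((d ^^ i) p)"
  by (induct i) (simp_all add: shift)
lemma pw_zero: "(d ^^ i) 0 = 0"
  by (induct i) (simp_all add: zero)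
lemma pw_diff: "(d ^^ i) (p - q) = (d ^^ i) p - (d ^^ i) q"
  by (induct i) (simp_all add: diff)
lemma pw_sum: "(d ^^ i) (sum f A) = (\<Sum>k\<in>A. (d ^^ i) (f k))"
  by (induct A rule: infinite_finite_induct) (simp_all add: pw_zero pw_add)

lemma one: "d 1 = 0"
proof -
  obtain c where c: "d [:0,1:] = [:c:]" using D by (auto simp: delta_operator_def)
  have "shift_op 1 [:0,1:] = [:0,1:] + (1::'a poly)"
    by (simp add: shift_op_def pcompose_pCons one_pCons)
  hence "d [:0,1:] + d 1 = shift_op 1 (d [:0,1:])" by (metis add shift)
  also have "\<dots> = d [:0,1:]" using c by (simp add: shift_op_def)
  finally show ?thesis by simp
qed

lemma const: "d [:a:] = 0"
proof -
  have "[:a:] = smult a (1::'a poly)" by simp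
  thus ?thesis by (metis smult one smult_0_right)
qed

end

locale gon = dop d for d :: "'a::field_char_0 poly \<Rightarrow> 'a poly" +
  fixes Z :: "nat \<Rightarrow> 'a" and t :: "nat \<Rightarrow> 'a poly"
  assumes G: "goncarov_basis d Z t"
begin

lemma deg_t: "degree (t n) = n" using G by (simp add: goncarov_basis_def)
lemma ev_t: "poly ((d ^^ i) (t n)) (Z i) = (if i = n then fact n else 0)"
  using G by (simp add: goncarov_basis_def)

lemma t_nz: "t n \<noteq> 0"
proof
  assume "t n = 0"
  hence "poly ((d ^^ n) (t n)) (Z n) = 0" by (simp add: pw_zero)
  with ev_t[of n n] show False by simp
qed

lemma repr: "degree p \<le> m \<Longrightarrow> \<exists>c. p = (\<Sum>k\<le>m. smult (c k) (t k))"
proof (induct m arbitrary: p)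
  case 0
  hence p: "p = [:coeff p 0:]" by (metis degree_0_id le_zero_eq)
  have t0: "t 0 = [:coeff (t 0) 0:]" using degree_0_id deg_t by metis
  have "coeff (t 0) 0 \<noteq> 0" using t_nz[of 0] t0 by (metis pCons_0_0)
  hence "p = smult (coeff p 0 / coeff (t 0) 0) (t 0)"
    by (subst p, subst t0) simp
  thus ?case by (intro exI[of _ "\<lambda>_. coeff p 0 / coeff (t 0) 0"]) simp
next
  case (Suc m)
  define c0 where "c0 = coeff p (Suc m) / lead_coeff (t (Suc m))"
  define p' where "p' = p - smult c0 (t (Suc m))"
  have lc: "lead_coeff (t (Suc m)) \<noteq> 0" using t_nz by simp
  have "degree p' \<le> m"
  proof (rule degree_le, intro allI impI)
    fix i assume "m < i"
    show "coeff p' i = 0"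
    proof (cases "i = Suc m")
      case True
      then show ?thesis using lc deg_t[of "Suc m"] by (simp add: p'_def c0_def)
    next
      case False
      with \<open>m < i\<close> have "Suc m < i" by simp
      then show ?thesis using Suc.prems deg_t[of "Suc m"]
        by (simp add: p'_def coeff_eq_0)
    qed
  qed
  then obtain c' where c': "p' = (\<Sum>k\<le>m. smult (c' k) (t k))" using Suc.hyps by blast
  define c where "c k = (if k = Suc m then c0 else c' k)" for k
  have "(\<Sum>k\<le>Suc m. smult (c k) (t k)) = (\<Sum>k\<le>m. smult (c' k) (t k)) + smult c0 (t (Suc m))"
    by (simp add: c_def)
  also have "\<dots> = p" using c' p'_def by (metis diff_add_cancel)
  finally show ?case by metis
qed

lemma eval_sum: "poly ((d ^^ i) (\<Sum>k\<le>m. smult (c k) (t k))) (Z i) = (if i \<le> m then c i * fact i else 0)"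
proof -
  have "poly ((d ^^ i) (\<Sum>k\<le>m. smult (c k) (t k))) (Z i)
      = (\<Sum>k\<le>m. c k * (if i = k then fact k else 0))"
    by (simp add: pw_sum pw_smult poly_sum ev_t)
  also have "\<dots> = (\<Sum>k\<le>m. (if k = i then c i * fact i else 0))"
    by (rule sum.cong) auto
  also have "\<dots> = (if i \<le> m then c i * fact i else 0)" by (simp add: sum.delta)
  finally show ?thesis .
qed

lemma zero_test:
  assumes "\<And>i. poly ((d ^^ i) p) (Z i) = 0" shows "p = 0"
proof -
  obtain c where c: "p = (\<Sum>k\<le>degree p. smult (c k) (t k))" using repr by blast
  have "\<forall>i\<le>degree p. c i = 0"
  proof (intro allI impI)
    fix i assume "i \<le> degree p"
    with assms[of i] eval_sum[where i=i and m="degree p" and c=c] c show "c i = 0" by simp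
  qed
  thus ?thesis using c by simp
qed

definition R :: "nat \<Rightarrow> 'a \<Rightarrow> 'a poly" where
  "R n y = (\<Sum>k\<le>n. smult (of_nat (n choose k) * poly (t (n-k)) y) (t k))"

definition Pc :: "nat \<Rightarrow> 'a \<Rightarrow> nat \<Rightarrow> bool" where
  "Pc n y i \<longleftrightarrow> poly ((d ^^ i) (t n)) (y + Z i)
     = (if i \<le> n then of_nat (n choose i) * poly (t (n-i)) y * fact i else 0)"

lemma ev_R: "poly ((d ^^ i) (R n y)) (Z i)
   = (if i \<le> n then of_nat (n choose i) * poly (t (n-i)) y * fact i else 0)"
  unfolding R_def by (subst eval_sum) simp

lemma bin_iff:
  "(\<forall>x. poly (t n) (x + y) = (\<Sum>k\<le>n. of_nat (n choose k) * poly (t k) x * poly (t (n - k)) y))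
   \<longleftrightarrow> (\<forall>i. Pc n y i)"
proof
  assume A: "\<forall>x. poly (t n) (x + y) = (\<Sum>k\<le>n. of_nat (n choose k) * poly (t k) x * poly (t (n - k)) y)"
  have E: "shift_op y (t n) = R n y"
    by (rule shift_eqI) (simp add: R_def poly_sum A[rule_format] add.commute mult_ac)
  show "\<forall>i. Pc n y i"
  proof
    fix i
    have "poly ((d ^^ i) (shift_op y (t n))) (Z i) = poly ((d ^^ i) (R n y)) (Z i)" using E by simp
    thus "Pc n y i" unfolding Pc_def ev_R by (simp add: pw_shift)
  qed
next
  assume B: "\<forall>i. Pc n y i"
  have "shift_op y (t n) - R n y = 0"
  proof (rule zero_test)
    fix i
    show "poly ((d ^^ i) (shift_op y (t n) - R n y)) (Z i) = 0"
      using B[rule_format, of i] unfolding Pc_def by (simp add: pw_diff pw_shift ev_R)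
  qed
  hence E: "shift_op y (t n) = R n y" by simp
  show "\<forall>x. poly (t n) (x + y) = (\<Sum>k\<le>n. of_nat (n choose k) * poly (t k) x * poly (t (n - k)) y)"
  proof
    fix x
    have "poly (shift_op y (t n)) x = poly (R n y) x" using E by simp
    thus "poly (t n) (x + y) = (\<Sum>k\<le>n. of_nat (n choose k) * poly (t k) x * poly (t (n - k)) y)"
      by (simp add: R_def poly_sum add.commute mult_ac)
  qed
qed

lemma iter:
  assumes key: "\<And>n. d (t (Suc n)) = smult (of_nat (Suc n)) (shift_op (-b) (t n))"
  shows "i \<le> n \<Longrightarrow> (d ^^ i) (t n) = smult (fact n / fact (n-i)) (shift_op (-(of_nat i * b)) (t (n-i)))"
proof (induct i arbitrary: n)
  case 0
  then show ?case by simp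
next
  case (Suc i)
  define m where "m = n - Suc i"
  have nm: "n - i = Suc m" using Suc.prems m_def by simp
  have "(d ^^ Suc i) (t n) = d ((d ^^ i) (t n))" by simp
  also have "\<dots> = smult (fact n / fact (Suc m)) (shift_op (-(of_nat i * b)) (d (t (Suc m))))"
    using Suc by (simp add: nm smult shift)
  also have "\<dots> = smult (fact n / fact (Suc m) * of_nat (Suc m)) (shift_op (-b + -(of_nat i * b)) (t m))"
    by (simp add: key)
  also have "fact n / fact (Suc m) * of_nat (Suc m) = (fact n / fact m :: 'a)"
    by (simp add: fact_Suc field_simps del: of_nat_Suc)
  also have "-b + -(of_nat i * b) = -(of_nat (Suc i) * b)" by (simp add: algebra_simps)
  finally show ?case by (simp add: m_def)
qed

end

theorem mainTheorem14:
  fixes d :: "'a::field_char_0 poly \<Rightarrow> 'a poly"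
    and Z :: "nat \<Rightarrow> 'a"
    and t :: "nat \<Rightarrow> 'a poly"
  assumes "delta_operator d"
    and "goncarov_basis d Z t"
  shows "binomial_type t \<longleftrightarrow> (\<exists>b. \<forall>i. Z i = of_nat i * b)"
proof -
  interpret gon d Z t using assms by (unfold_locales)
  show ?thesis
  proof
    assume bt: "binomial_type t"
    have P: "Pc n y i" for n y i
      using bt bin_iff[of n y] unfolding binomial_type_def by blast
    define b where "b = Z 1"
    have key: "d (t (Suc n)) = smult (of_nat (Suc n)) (shift_op (-b) (t n))" for n
    proof (rule shift_eqI)
      fix x
      have "Pc (Suc n) (x - b) 1" by (rule P)
      thus "poly (d (t (Suc n))) x = poly (smult (of_nat (Suc n)) (shift_op (- b) (t n))) x"
        unfolding Pc_def b_def by (simp add: algebra_simps)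
    qed
    have "Z i = of_nat i * b" for i
    proof -
      have it: "(d ^^ i) (t (Suc i)) = smult (fact (Suc i) / fact 1) (shift_op (-(of_nat i * b)) (t 1))"
        using iter[OF key, of i "Suc i"] by simp
      have "Pc (Suc i) y i" for y by (rule P)
      hence eq: "fact (Suc i) * poly (t 1) (-(of_nat i * b) + (y + Z i)) = of_nat (Suc i) * poly (t 1) y * fact i" for y
        unfolding Pc_def it by simp
      have eq2: "poly (t 1) (y + (Z i - of_nat i * b)) = poly (t 1) y" for y
      proof -
        have "fact (Suc i) * poly (t 1) (y + (Z i - of_nat i * b)) = fact (Suc i) * poly (t 1) y"
          using eq[of y] by (simp add: algebra_simps fact_Suc)
        moreover have "(fact (Suc i) :: 'a) \<noteq> 0" by (rule fact_nonzero)
        ultimately show ?thesis by (metis mult_cancel_left)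
      qed
      have d1: "degree (t 1) = 1" by (rule deg_t)
      have pt: "poly (t 1) x = coeff (t 1) 0 + coeff (t 1) 1 * x" for x
        using d1 by (simp add: poly_altdef)
      have "coeff (t 1) 1 \<noteq> 0" using d1 t_nz[of 1] by (metis leading_coeff_0_iff)
      thus ?thesis using eq2[of 0] unfolding pt by simp
    qed
    thus "\<exists>b. \<forall>i. Z i = of_nat i * b" by blast
  next
    assume "\<exists>b. \<forall>i. Z i = of_nat i * b"
    then obtain b where Zb: "\<And>i. Z i = of_nat i * b" by blast
    have key: "d (t (Suc n)) = smult (of_nat (Suc n)) (shift_op (-b) (t n))" for n
    proof -
      define s where "s = smult (1 / of_nat (Suc n)) (shift_op b (d (t (Suc n)))) - t n"
      have "s = 0"
      proof (rule zero_test)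
        fix i
        have "(d ^^ i) (d (t (Suc n))) = (d ^^ Suc i) (t (Suc n))" by (simp only: funpow_Suc_right o_apply)
        moreover have "b + Z i = Z (Suc i)" using Zb by (simp add: algebra_simps)
        moreover have "(1 + of_nat n :: 'a) \<noteq> 0" using of_nat_neq_0[of n] by (simp add: add.commute)
        ultimately show "poly ((d ^^ i) s) (Z i) = 0"
          unfolding s_def by (simp add: pw_diff pw_smult pw_shift ev_t fact_Suc del: funpow.simps)
      qed
      hence h: "smult (1 / of_nat (Suc n)) (shift_op b (d (t (Suc n)))) = t n"
        unfolding s_def by simp
      have "shift_op b (d (t (Suc n))) = smult (of_nat (Suc n)) (smult (1 / of_nat (Suc n)) (shift_op b (d (t (Suc n)))))"
        by (simp del: of_nat_Suc)
      hence "shift_op b (d (t (Suc n))) = smult (of_nat (Suc n)) (t n)" by (simp only: h)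
      hence "shift_op (-b) (shift_op b (d (t (Suc n)))) = shift_op (-b) (smult (of_nat (Suc n)) (t n))"
        by simp
      thus ?thesis by simp
    qed
    have d0: "d (t 0) = 0" using deg_t[of 0] const by (metis degree_0_id)
    have "Pc n y i" for n y i
    proof (cases "i \<le> n")
      case True
      have "fact n / fact (n - i) = (of_nat (n choose i) * fact i :: 'a)"
        using True by (simp add: binomial_fact)
      then show ?thesis using True unfolding Pc_def iter[OF key True] by (simp add: Zb mult_ac)
    next
      case False
      define j where "j = i - Suc n"
      have i: "i = j + Suc n" using False j_def by simp
      have "(d ^^ Suc n) (t n) = d ((d ^^ n) (t n))" by simp
      also have "\<dots> = 0" unfolding iter[OF key order.refl] by (simp add: smult shift d0)
      finally have "(d ^^ i) (t n) = 0" unfolding i funpow_add by (simp add: pw_zero)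
      then show ?thesis using False unfolding Pc_def by simp
    qed
    thus "binomial_type t" unfolding binomial_type_def using bin_iff deg_t by blast
  qed
qed

end
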